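(* Assume: (1) each $h_i$ is measurable in $\xi_i$ and continuously differentiable in $x_i$ for every fixed $x_{-i}\in X_{-i}$, $\xi_i\in\Xi_i$; (2) each $X_i$ is compact and convex and $h_i(\cdot,x_{-i},\xi_i)$ is convex for every $x_{-i},\xi_i$; (3) for each $i$, every distribution $\mathbb{Q}_i$ in agent $i$'s ambiguity set belongs to $\mathcal{M}(\Xi_i)$ and there is $a_i>1$ with $\mathbb{E}_{\mathbb{Q}_i}[\exp(\|\xi_i\|^{a_i})]<\infty$; (4) for every $i\in\mathcal{N}$ and $j\in\{1,\dots,n\}$ there is $L_{i,j}\ge0$ with $\big|\frac{\partial h_i(x,\xi_i)}{\partial x_i^{(j)}}-\frac{\partial h_i(x,\xi_i')}{\partial x_i^{(j)}}\big|\le L_{i,j}\|\xi_i-\xi_i'\|$ for all $x\in X$, $\xi_i,\xi_i'\in\Xi_i$. Let $\epsilon_i(K_i,\beta_i)\ge0$ be the radius used by agent $i$ and $\mathcal{W}_K(\hat{\mathbb{P}}_K)=\prod_{i=1}^N\mathbb{B}_{\epsilon_i(K_i,\beta_i)}(\hat{\mathbb{P}}_{K_i})$. Then for any $x$ in an open set $V\subset X$ and any $q_K=\mathrm{col}((q_{K_i})_i)\in\mathcal{W}_K(\hat{\mathbb{P}}_K)$, $$\|F_{q_K}(x)-F_{\mathbb{P}}(x)\|^2\le\rho_K:=\sum_{i=1}^N\sum_{j=1}^{n}L_{i,j}^2\big[\epsilon_i(K_i,\beta_i)+d_W(\hat{\mathbb{P}}_{K_i},\mathbb{P}_i)\big]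^2.$$
   Context: Agents $i\in\mathcal{N}=\{1,\dots,N\}$ choose $x_i=\mathrm{col}(x_i^{(1)},\dots,x_i^{(n)})\in X_i\subseteq\mathbb{R}^n$; $X=\prod_iX_i$, $x=\mathrm{col}((x_i)_i)$, $x_{-i}$ the others' decisions, $X_{-i}=\prod_{j\ne i}X_j$. Agent $i$'s cost is $h_i:\mathbb{R}^{nN}\times\Xi_i\to\mathbb{R}$ with uncertainty $\xi_i\in\Xi_i\subseteq\mathbb{R}^p$ whose true distribution is $\mathbb{P}_i$; $\mathbb{P}=\mathrm{col}((\mathbb{P}_i)_i)$. $\|\cdot\|$ is the Euclidean norm; $\mathcal{M}(\Xi_i)$ is the set of distributions on $\Xi_i$ with finite first moment; $d_W(\mathbb{Q}_1,\mathbb{Q}_2)=\inf_\Pi\int\|\xi_1-\xi_2\|\Pi(d\xi_1,d\xi_2)$ over couplings $\Pi$ of $\mathbb{Q}_1,\mathbb{Q}_2$. From $K_i$ samples $\xi_i^{(1)},\dots,\xi_i^{(K_i)}$, $\hat{\mathbb{P}}_{K_i}=\frac1{K_i}\sum_k\delta_{\xi_i^{(k)}}$, and $\mathbb{B}_\epsilon(\hat{\mathbb{P}}_{K_i})=\{\mathbb{Q}\in\mathcal{M}(\Xi_i):d_W(\hat{\mathbb{P}}_{K_i},\mathbb{Q})\le\epsilon\}$ is agent $i$'s ambiguity set. For a collection $q=\mathrm{col}((q_i)_i)$ of distributions, $F_q(x)=\mathrm{col}((\nabla_{x_i}\mathbb{E}_{q_i}[h_i(x_i,x_{-i},\xi_i)])_{i\in\mathcal{N}})$.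 *)

theory Defs
  imports "HOL-Probability.Probability"
begin

text \<open>Joint decisions are x :: real^'n^'i, x $ i = decision of agent i in R^n.
  Uncertainties live in a Euclidean space 'x (= R^p).\<close>

definition upd :: "real^'n^'i \<Rightarrow> 'i \<Rightarrow> real^'n \<Rightarrow> real^'n^'i" where
  "upd x i y = (\<chi> k. if k = i then y else x $ k)"

definition pderiv_ij :: "(real^'n^'i \<Rightarrow> real) \<Rightarrow> 'i \<Rightarrow> 'n \<Rightarrow> real^'n^'i \<Rightarrow> real" where
  "pderiv_ij g i j x = deriv (\<lambda>t. g (upd x i (x $ i + t *\<^sub>R axis j 1))) 0"

definition C1_on_UNIV :: "(real^'n \<Rightarrow> real) \<Rightarrow> bool" where
  "C1_on_UNIV f \<longleftrightarrow> (\<exists>D. (\<forall>y. (f has_derivative (\<lambda>v. D y \<bullet> v)) (at y)) \<and> continuous_on UNIV D)"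

definition distrs_M :: "'x::euclidean_space set \<Rightarrow> 'x measure set" where
  "distrs_M Xi = {Q. sets Q = sets borel \<and> prob_space Q \<and> Xi \<in> sets borel \<and>
                     measure Q Xi = 1 \<and> integrable Q norm}"

definition couplings :: "'x::euclidean_space measure \<Rightarrow> 'x measure \<Rightarrow> ('x \<times> 'x) measure set" where
  "couplings Q1 Q2 = {Pi. sets Pi = sets borel \<and> distr Pi borel fst = Q1 \<and> distr Pi borel snd = Q2}"

definition d_W :: "'x::euclidean_space measure \<Rightarrow> 'x measure \<Rightarrow> real" where
  "d_W Q1 Q2 = enn2real (INF Pi \<in> couplings Q1 Q2. \<integral>\<^sup>+ p. ennreal (norm (fst p - snd p)) \<partial>Pi)"

definition empirical :: "nat \<Rightarrow> (nat \<Rightarrow> 'x::euclidean_space) \<Rightarrow> 'x measure" where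
  "empirical K s = distr (uniform_count_measure {..<K}) borel s"

definition wball :: "'x::euclidean_space set \<Rightarrow> real \<Rightarrow> 'x measure \<Rightarrow> 'x measure set" where
  "wball Xi eps P = {Q \<in> distrs_M Xi. d_W P Q \<le> eps}"

definition Fmap :: "('i \<Rightarrow> real^'n^'i \<Rightarrow> 'x::euclidean_space \<Rightarrow> real) \<Rightarrow> ('i \<Rightarrow> 'x measure)
                     \<Rightarrow> real^'n^'i \<Rightarrow> real^'n^'i" where
  "Fmap h q x = (\<chi> i. \<chi> j. pderiv_ij (\<lambda>z. \<integral>\<xi>. h i z \<xi> \<partial>(q i)) i j x)"

end

theory Submission
  imports Defs
begin


lemma AE_Xi:
  assumes "Q \<in> distrs_M Xi"
  shows "AE x in Q. x \<in> Xi"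
proof -
  have Q: "prob_space Q" "sets Q = sets borel" "Xi \<in> sets borel" "measure Q Xi = 1"
    using assms by (auto simp: distrs_M_def)
  show ?thesis
    by (rule prob_space.AE_prob_1[OF Q(1)]) (use Q in auto)
qed

lemma coupling_facts:
  fixes Q1 Q2 :: "'x::euclidean_space measure"
  assumes CP: "CP \<in> couplings Q1 Q2"
  shows "fst \<in> measurable CP borel" "snd \<in> measurable CP borel"
    "Q1 = distr CP borel fst" "Q2 = distr CP borel snd"
proof -
  have s: "sets CP = sets borel" using CP by (simp add: couplings_def)
  show "fst \<in> measurable CP borel" "snd \<in> measurable CP borel"
    unfolding measurable_cong_sets[OF s refl, of borel] borel_prod[symmetric] by auto
  show "Q1 = distr CP borel fst" "Q2 = distr CP borel snd" using CP by (auto simp: couplings_def)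
qed

lemma coupling_bound:
  fixes f :: "'x::euclidean_space \<Rightarrow> real"
  assumes Q1: "Q1 \<in> distrs_M Xi" and Q2: "Q2 \<in> distrs_M Xi" and CP: "CP \<in> couplings Q1 Q2"
    and fm: "f \<in> borel_measurable borel"
    and lip: "\<And>a b. a \<in> Xi \<Longrightarrow> b \<in> Xi \<Longrightarrow> \<bar>f a - f b\<bar> \<le> L * norm (a - b)"
    and L: "L \<ge> 0"
    and int1: "integrable Q1 f" and int2: "integrable Q2 f"
  shows "ennreal \<bar>integral\<^sup>L Q1 f - integral\<^sup>L Q2 f\<bar> \<le> ennreal L * (\<integral>\<^sup>+ p. ennreal (norm (fst p - snd p)) \<partial>CP)"
proof -
  note cf = coupling_facts[OF CP]
  have i1: "integral\<^sup>L Q1 f = (\<integral>p. f (fst p) \<partial>CP)"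
    by (subst cf(3)) (rule integral_distr[OF cf(1) fm])
  have i2: "integral\<^sup>L Q2 f = (\<integral>p. f (snd p) \<partial>CP)"
    by (subst cf(4)) (rule integral_distr[OF cf(2) fm])
  have j1: "integrable CP (\<lambda>p. f (fst p))"
    using int1 by (subst (asm) cf(3)) (simp add: integrable_distr_eq[OF cf(1) fm])
  have j2: "integrable CP (\<lambda>p. f (snd p))"
    using int2 by (subst (asm) cf(4)) (simp add: integrable_distr_eq[OF cf(2) fm])
  have ji: "integrable CP (\<lambda>p. \<bar>f (fst p) - f (snd p)\<bar>)"
    by (intro integrable_abs Bochner_Integration.integrable_diff j1 j2)
  have AE1: "AE p in CP. fst p \<in> Xi"
  proof -
    have "AE x in distr CP borel fst. x \<in> Xi" by (subst cf(3)[symmetric]) (rule AE_Xi[OF Q1])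
    moreover have "Xi \<in> sets borel" using Q1 by (simp add: distrs_M_def)
    ultimately show ?thesis by (subst (asm) AE_distr_iff[OF cf(1)]) auto
  qed
  have AE2: "AE p in CP. snd p \<in> Xi"
  proof -
    have "AE x in distr CP borel snd. x \<in> Xi" by (subst cf(4)[symmetric]) (rule AE_Xi[OF Q2])
    moreover have "Xi \<in> sets borel" using Q1 by (simp add: distrs_M_def)
    ultimately show ?thesis by (subst (asm) AE_distr_iff[OF cf(2)]) auto
  qed
  have "\<bar>integral\<^sup>L Q1 f - integral\<^sup>L Q2 f\<bar> = \<bar>\<integral>p. f (fst p) - f (snd p) \<partial>CP\<bar>"
    using i1 i2 j1 j2 by simp
  also have "\<dots> \<le> (\<integral>p. \<bar>f (fst p) - f (snd p)\<bar> \<partial>CP)"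
    by (rule integral_abs_bound)
  finally have "ennreal \<bar>integral\<^sup>L Q1 f - integral\<^sup>L Q2 f\<bar> \<le> ennreal (\<integral>p. \<bar>f (fst p) - f (snd p)\<bar> \<partial>CP)"
    by (rule ennreal_leI)
  also have "\<dots> = (\<integral>\<^sup>+p. ennreal \<bar>f (fst p) - f (snd p)\<bar> \<partial>CP)"
    by (rule nn_integral_eq_integral[OF ji, symmetric]) auto
  also have "\<dots> \<le> (\<integral>\<^sup>+p. ennreal L * ennreal (norm (fst p - snd p)) \<partial>CP)"
    using AE1 AE2
  proof (intro nn_integral_mono_AE, eventually_elim)
    fix p :: "'x \<times> 'x" assume "fst p \<in> Xi" "snd p \<in> Xi"
    then have "\<bar>f (fst p) - f (snd p)\<bar> \<le> L * norm (fst p - snd p)" by (rule lip)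
    then show "ennreal \<bar>f (fst p) - f (snd p)\<bar> \<le> ennreal L * ennreal (norm (fst p - snd p))"
      using L by (simp add: ennreal_mult[symmetric] ennreal_leI)
  qed
  also have "\<dots> = ennreal L * (\<integral>\<^sup>+ p. ennreal (norm (fst p - snd p)) \<partial>CP)"
  proof (rule nn_integral_cmult)
    show "(\<lambda>p. ennreal (norm (fst p - snd p))) \<in> borel_measurable CP"
      using cf(1,2) by measurable
  qed
  finally show ?thesis .
qed


lemma coupling_cost_finite:
  fixes Q1 Q2 :: "'x::euclidean_space measure"
  assumes Q1: "Q1 \<in> distrs_M Xi" and Q2: "Q2 \<in> distrs_M Xi" and CP: "CP \<in> couplings Q1 Q2"
  shows "(\<integral>\<^sup>+ p. ennreal (norm (fst p - snd p)) \<partial>CP) < \<infinity>"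
proof -
  note cf = coupling_facts[OF CP]
  have n1: "(\<integral>\<^sup>+ x. ennreal (norm x) \<partial>Q1) < \<infinity>"
    using Q1 by (auto simp: distrs_M_def integrable_iff_bounded)
  have n2: "(\<integral>\<^sup>+ x. ennreal (norm x) \<partial>Q2) < \<infinity>"
    using Q2 by (auto simp: distrs_M_def integrable_iff_bounded)
  have mn: "(\<lambda>x::'x. ennreal (norm x)) \<in> borel_measurable borel" by measurable
  have m1: "(\<lambda>p. ennreal (norm (fst p))) \<in> borel_measurable CP"
    using measurable_compose[OF cf(1) mn] by (simp add: o_def)
  have m2: "(\<lambda>p. ennreal (norm (snd p))) \<in> borel_measurable CP"
    using measurable_compose[OF cf(2) mn] by (simp add: o_def)
  have e1: "(\<integral>\<^sup>+ p. ennreal (norm (fst p)) \<partial>CP) = (\<integral>\<^sup>+ x. ennreal (norm x) \<partial>Q1)"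
    by (subst cf(3)) (rule nn_integral_distr[OF cf(1), symmetric], simp add: mn)
  have e2: "(\<integral>\<^sup>+ p. ennreal (norm (snd p)) \<partial>CP) = (\<integral>\<^sup>+ x. ennreal (norm x) \<partial>Q2)"
    by (subst cf(4)) (rule nn_integral_distr[OF cf(2), symmetric], simp add: mn)
  have "(\<integral>\<^sup>+ p. ennreal (norm (fst p - snd p)) \<partial>CP) \<le> (\<integral>\<^sup>+ p. ennreal (norm (fst p)) + ennreal (norm (snd p)) \<partial>CP)"
    by (intro nn_integral_mono) (simp add: ennreal_plus[symmetric] norm_triangle_ineq4 del: ennreal_plus)
  also have "\<dots> = (\<integral>\<^sup>+ p. ennreal (norm (fst p)) \<partial>CP) + (\<integral>\<^sup>+ p. ennreal (norm (snd p)) \<partial>CP)"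
    by (rule nn_integral_add[OF m1 m2])
  also have "\<dots> < \<infinity>" using n1 n2 e1 e2 by simp
  finally show ?thesis .
qed

lemma product_coupling:
  fixes Q1 Q2 :: "'x::euclidean_space measure"
  assumes Q1: "Q1 \<in> distrs_M Xi" and Q2: "Q2 \<in> distrs_M Xi"
  shows "Q1 \<Otimes>\<^sub>M Q2 \<in> couplings Q1 Q2"
proof -
  have p1: "prob_space Q1" and s1: "sets Q1 = sets borel" using Q1 by (auto simp: distrs_M_def)
  have p2: "prob_space Q2" and s2: "sets Q2 = sets borel" using Q2 by (auto simp: distrs_M_def)
  interpret pair_prob_space Q1 Q2 using p1 p2 by (simp add: pair_prob_space_def pair_sigma_finite_def prob_space_imp_sigma_finite)
  have sp: "sets (Q1 \<Otimes>\<^sub>M Q2) = sets borel"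
    by (subst sets_pair_measure_cong[OF s1 s2]) (simp only: borel_prod)
  have d1: "distr (Q1 \<Otimes>\<^sub>M Q2) borel fst = Q1"
  proof -
    have "distr (Q1 \<Otimes>\<^sub>M Q2) borel fst = distr (Q1 \<Otimes>\<^sub>M Q2) Q1 fst"
      by (rule distr_cong) (use s1 in auto)
    also have "\<dots> = Q1" by (rule prob_space.distr_pair_fst[OF p2])
    finally show ?thesis .
  qed
  have d2: "distr (Q1 \<Otimes>\<^sub>M Q2) borel snd = Q2"
  proof -
    have "distr (Q1 \<Otimes>\<^sub>M Q2) borel snd = distr (Q1 \<Otimes>\<^sub>M Q2) Q2 snd"
      by (rule distr_cong) (use s2 in auto)
    also have "\<dots> = Q2"
    proof (intro measure_eqI)
      fix A assume A: "A \<in> sets (distr (Q1 \<Otimes>\<^sub>M Q2) Q2 snd)"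
      then have A2: "A \<in> sets Q2" by simp
      have "emeasure (distr (Q1 \<Otimes>\<^sub>M Q2) Q2 snd) A = emeasure (Q1 \<Otimes>\<^sub>M Q2) (space Q1 \<times> A)"
        using A2 by (auto simp add: emeasure_distr space_pair_measure dest: sets.sets_into_space intro!: arg_cong2[where f=emeasure])
      then show "emeasure (distr (Q1 \<Otimes>\<^sub>M Q2) Q2 snd) A = emeasure Q2 A"
        using A2 M2.emeasure_pair_measure_Times[of "space Q1" Q1 A] by (simp add: prob_space.emeasure_space_1[OF p1])
    qed simp
    finally show ?thesis .
  qed
  show ?thesis using sp d1 d2 by (simp add: couplings_def)
qed

lemma wasserstein_bound:
  fixes f :: "'x::euclidean_space \<Rightarrow> real"
  assumes Q1: "Q1 \<in> distrs_M Xi" and Q2: "Q2 \<in> distrs_M Xi"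
    and fm: "f \<in> borel_measurable borel"
    and lip: "\<And>a b. a \<in> Xi \<Longrightarrow> b \<in> Xi \<Longrightarrow> \<bar>f a - f b\<bar> \<le> L * norm (a - b)"
    and L: "L \<ge> 0"
    and int1: "integrable Q1 f" and int2: "integrable Q2 f"
  shows "\<bar>integral\<^sup>L Q1 f - integral\<^sup>L Q2 f\<bar> \<le> L * d_W Q1 Q2"
proof -
  define \<Delta> where "\<Delta> = \<bar>integral\<^sup>L Q1 f - integral\<^sup>L Q2 f\<bar>"
  define cost where "cost CP = (\<integral>\<^sup>+ p. ennreal (norm (fst p - snd p)) \<partial>CP)" for CP :: "('x \<times> 'x) measure"
  have cb: "ennreal \<Delta> \<le> ennreal L * cost CP" if "CP \<in> couplings Q1 Q2" for CP
    unfolding \<Delta>_def cost_def by (rule coupling_bound[OF Q1 Q2 that fm lip L int1 int2])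
  have cf: "cost CP < \<infinity>" if "CP \<in> couplings Q1 Q2" for CP
    unfolding cost_def by (rule coupling_cost_finite[OF Q1 Q2 that])
  have P0: "Q1 \<Otimes>\<^sub>M Q2 \<in> couplings Q1 Q2" by (rule product_coupling[OF Q1 Q2])
  have dW: "d_W Q1 Q2 = enn2real (INF CP \<in> couplings Q1 Q2. cost CP)"
    unfolding d_W_def cost_def ..
  have dW0: "d_W Q1 Q2 \<ge> 0" by (simp add: d_W_def)
  show ?thesis
  proof (cases "L = 0")
    case True
    with cb[OF P0] have "\<Delta> \<le> 0" by (simp add: ennreal_eq_0_iff)
    then show ?thesis unfolding \<Delta>_def using True by simp
  next
    case False
    then have Lp: "L > 0" using L by simp
    have "ennreal (\<Delta> / L) \<le> cost CP" if CP: "CP \<in> couplings Q1 Q2" for CP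
    proof -
      obtain c where c: "cost CP = ennreal c" "c \<ge> 0" using cf[OF CP]
        by (cases "cost CP") auto
      have "ennreal \<Delta> \<le> ennreal (L * c)" using cb[OF CP] c L by (simp add: ennreal_mult)
      then have "\<Delta> \<le> L * c" using c L by (simp add: ennreal_le_iff)
      then have "\<Delta> / L \<le> c" using Lp by (simp add: divide_le_eq mult.commute)
      then show ?thesis using c by (simp add: ennreal_leI)
    qed
    then have "ennreal (\<Delta> / L) \<le> (INF CP \<in> couplings Q1 Q2. cost CP)"
      by (rule INF_greatest)
    moreover have "(INF CP \<in> couplings Q1 Q2. cost CP) < \<infinity>"
      using cf[OF P0] INF_lower[OF P0, of cost] by (meson order.strict_trans1)
    ultimately have "enn2real (ennreal (\<Delta> / L)) \<le> d_W Q1 Q2"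
      unfolding dW by (intro enn2real_mono) auto
    moreover have "\<Delta> \<ge> 0" unfolding \<Delta>_def by simp
    ultimately have "\<Delta> / L \<le> d_W Q1 Q2" using Lp by simp
    then show ?thesis unfolding \<Delta>_def using Lp by (simp add: divide_le_eq mult.commute)
  qed
qed



lemma distrs_nonempty:
  assumes "Q \<in> distrs_M Xi" shows "Xi \<noteq> {}"
  using assms by (auto simp: distrs_M_def)

lemma lip_integrable:
  fixes f :: "'x::euclidean_space \<Rightarrow> real"
  assumes Q: "Q \<in> distrs_M Xi" and fm: "f \<in> borel_measurable borel"
    and lip: "\<And>a b. a \<in> Xi \<Longrightarrow> b \<in> Xi \<Longrightarrow> \<bar>f a - f b\<bar> \<le> L * norm (a - b)"
    and x0: "x0 \<in> Xi"
  shows "integrable Q f"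
proof -
  have p: "prob_space Q" and s: "sets Q = sets borel" and n: "integrable Q norm"
    using Q by (auto simp: distrs_M_def)
  have fm': "f \<in> borel_measurable Q" unfolding measurable_cong_sets[OF s refl, of borel] by (rule fm)
  interpret prob_space Q by (rule p)
  show ?thesis
  proof (rule Bochner_Integration.integrable_bound)
    show "integrable Q (\<lambda>x. \<bar>f x0\<bar> + \<bar>L\<bar> * (norm x + norm x0))"
      using n by (intro Bochner_Integration.integrable_add integrable_mult_right) auto
    show "f \<in> borel_measurable Q" by (rule fm')
    show "AE x in Q. norm (f x) \<le> norm (\<bar>f x0\<bar> + \<bar>L\<bar> * (norm x + norm x0))"
      using AE_Xi[OF Q]
    proof eventually_elim
      fix x assume x: "x \<in> Xi"
      have "\<bar>f x - f x0\<bar> \<le> L * norm (x - x0)" by (rule lip[OF x x0])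
      also have "\<dots> \<le> \<bar>L\<bar> * (norm x + norm x0)"
        by (intro mult_mono) (auto simp: norm_triangle_ineq4)
      finally show "norm (f x) \<le> norm (\<bar>f x0\<bar> + \<bar>L\<bar> * (norm x + norm x0))" by simp
    qed
  qed
qed

lemma empirical_M:
  fixes s :: "nat \<Rightarrow> 'x::euclidean_space"
  assumes K: "K > 0" and sin: "\<And>k. k < K \<Longrightarrow> s k \<in> Xi" and Xi: "Xi \<in> sets borel"
  shows "empirical K s \<in> distrs_M Xi"
proof -
  have pu: "prob_space (uniform_count_measure {..<K})"
    using K by (intro prob_space_uniform_count_measure) auto
  have ms: "s \<in> measurable (uniform_count_measure {..<K}) borel"
    by (simp add: measurable_def space_uniform_count_measure sets_uniform_count_measure)
  have pe: "prob_space (empirical K s)"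
    unfolding empirical_def by (rule prob_space.prob_space_distr[OF pu ms])
  have "measure (empirical K s) Xi = measure (uniform_count_measure {..<K}) (s -` Xi \<inter> space (uniform_count_measure {..<K}))"
    unfolding empirical_def by (rule measure_distr[OF ms]) (simp add: Xi)
  also have "s -` Xi \<inter> space (uniform_count_measure {..<K}) = space (uniform_count_measure {..<K})"
    using sin by (auto simp: space_uniform_count_measure)
  also have "measure (uniform_count_measure {..<K}) \<dots> = 1"
    by (rule prob_space.prob_space[OF pu])
  finally have m1: "measure (empirical K s) Xi = 1" .
  have "integrable (uniform_count_measure {..<K}) (\<lambda>k. norm (s k))"
  proof (rule finite_measure.integrable_const_bound)
    show "finite_measure (uniform_count_measure {..<K})"
      using pu by (simp add: prob_space_def)
    show "AE x in uniform_count_measure {..<K}. norm (norm (s x)) \<le> (\<Sum>k<K. norm (s k))"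
    proof (rule AE_I2)
      fix x assume "x \<in> space (uniform_count_measure {..<K})"
      then have "x \<in> {..<K}" by (simp add: space_uniform_count_measure)
      then show "norm (norm (s x)) \<le> (\<Sum>k<K. norm (s k))"
        using member_le_sum[of x "{..<K}" "\<lambda>k. norm (s k)"] by simp
    qed
    show "(\<lambda>k. norm (s k)) \<in> borel_measurable (uniform_count_measure {..<K})"
      by (simp add: measurable_def space_uniform_count_measure sets_uniform_count_measure)
  qed
  then have ie: "integrable (empirical K s) norm"
    unfolding empirical_def by (subst integrable_distr_eq[OF ms]) auto
  show ?thesis using pe m1 ie Xi by (simp add: distrs_M_def empirical_def)
qed



lemma quot_lim:
  fixes g :: "real \<Rightarrow> real"
  assumes "(g has_real_derivative D) (at 0)" and "\<And>n. X n \<noteq> 0" and "X \<longlonglongrightarrow> 0"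
  shows "(\<lambda>n. (g (X n) - g 0) / X n) \<longlonglongrightarrow> D"
proof -
  have "((\<lambda>h. (g (0 + h) - g 0) / h) \<longlongrightarrow> D) (at 0 within UNIV)"
    using assms(1) by (simp add: DERIV_def)
  then have "((\<lambda>h. (g (0 + h) - g 0) / h) \<circ> X) \<longlonglongrightarrow> D"
    using assms(2,3) unfolding tendsto_at_iff_sequentially by auto
  then show ?thesis by (simp add: o_def)
qed

lemma deriv_under_integral:
  fixes G G' :: "real \<Rightarrow> 'x::euclidean_space \<Rightarrow> real" and w :: "'x \<Rightarrow> real"
  assumes AES: "AE \<xi> in Q. \<xi> \<in> S"
    and \<delta>: "\<delta> > 0"
    and Gm: "\<And>t. G t \<in> borel_measurable Q"
    and Gi: "\<And>t. \<bar>t\<bar> \<le> \<delta> \<Longrightarrow> integrable Q (G t)"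
    and der: "\<And>\<xi> t. \<xi> \<in> S \<Longrightarrow> ((\<lambda>t. G t \<xi>) has_real_derivative G' t \<xi>) (at t)"
    and bnd: "\<And>\<xi> t. \<xi> \<in> S \<Longrightarrow> \<bar>t\<bar> \<le> \<delta> \<Longrightarrow> \<bar>G' t \<xi>\<bar> \<le> w \<xi>"
    and w: "integrable Q w"
  defines "fL \<equiv> \<lambda>\<xi>. lim (\<lambda>n. (G (\<delta> / Suc n) \<xi> - G 0 \<xi>) / (\<delta> / Suc n))"
  shows "((\<lambda>t. \<integral>\<xi>. G t \<xi> \<partial>Q) has_real_derivative (\<integral>\<xi>. fL \<xi> \<partial>Q)) (at 0)"
    and "\<And>\<xi>. \<xi> \<in> S \<Longrightarrow> fL \<xi> = G' 0 \<xi>"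
    and "fL \<in> borel_measurable Q"
proof -
  have seq0: "(\<lambda>n. \<delta> / real (Suc n)) \<longlonglongrightarrow> 0"
    using LIMSEQ_Suc[OF lim_const_over_n[of \<delta>]] by simp
  have seqnz: "\<And>n. \<delta> / real (Suc n) \<noteq> 0" using \<delta> by simp
  show fLeq: "fL \<xi> = G' 0 \<xi>" if "\<xi> \<in> S" for \<xi>
    unfolding fL_def
    by (rule limI, rule quot_lim[OF der[OF that] seqnz seq0])
  show fLm: "fL \<in> borel_measurable Q"
    unfolding fL_def
    by (intro borel_measurable_lim_metric borel_measurable_divide borel_measurable_diff Gm borel_measurable_const)
  have mvt: "\<bar>G t \<xi> - G 0 \<xi>\<bar> \<le> w \<xi> * \<bar>t\<bar>" if \<xi>: "\<xi> \<in> S" and t: "\<bar>t\<bar> \<le> \<delta>" for \<xi> t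
  proof -
    have "norm (G t \<xi> - G 0 \<xi>) \<le> w \<xi> * norm (t - 0)"
    proof (rule field_differentiable_bound[where S="{-\<bar>t\<bar>..\<bar>t\<bar>}" and f'="\<lambda>s. G' s \<xi>"])
      show "convex {-\<bar>t\<bar>..\<bar>t\<bar>}" by simp
      show "((\<lambda>s. G s \<xi>) has_field_derivative G' z \<xi>) (at z within {-\<bar>t\<bar>..\<bar>t\<bar>})" for z
        by (rule has_field_derivative_at_within[OF der[OF \<xi>]])
      show "norm (G' z \<xi>) \<le> w \<xi>" if "z \<in> {-\<bar>t\<bar>..\<bar>t\<bar>}" for z
        using bnd[OF \<xi>, of z] that t by auto
    qed auto
    then show ?thesis by simp
  qed
  have "((\<lambda>h. ((\<integral>\<xi>. G (0 + h) \<xi> \<partial>Q) - (\<integral>\<xi>. G 0 \<xi> \<partial>Q)) / h) \<longlongrightarrow> (\<integral>\<xi>. fL \<xi> \<partial>Q)) (at 0 within UNIV)"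
    unfolding tendsto_at_iff_sequentially
  proof (intro allI impI)
    fix X :: "nat \<Rightarrow> real"
    assume Xnz: "\<forall>i. X i \<in> UNIV - {0}" and X0: "X \<longlonglongrightarrow> 0"
    obtain N where N: "\<And>n. n \<ge> N \<Longrightarrow> \<bar>X n\<bar> < \<delta>"
      using X0 \<delta> unfolding LIMSEQ_iff by fastforce
    define s where "s n = (\<lambda>\<xi>. (G (X (n + N)) \<xi> - G 0 \<xi>) / X (n + N))" for n
    have lim: "(\<lambda>n. integral\<^sup>L Q (s n)) \<longlonglongrightarrow> integral\<^sup>L Q fL"
    proof (rule integral_dominated_convergence[where w=w])
      show "fL \<in> borel_measurable Q" by (rule fLm)
      show "s n \<in> borel_measurable Q" for n
        unfolding s_def by (intro borel_measurable_divide borel_measurable_diff Gm borel_measurable_const)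
      show "integrable Q w" by (rule w)
      show "AE \<xi> in Q. (\<lambda>n. s n \<xi>) \<longlonglongrightarrow> fL \<xi>"
        using AES
      proof eventually_elim
        fix \<xi> assume \<xi>: "\<xi> \<in> S"
        have "(\<lambda>n. (G (X (n + N)) \<xi> - G 0 \<xi>) / X (n + N)) \<longlonglongrightarrow> G' 0 \<xi>"
          by (rule quot_lim[OF der[OF \<xi>]]) (use Xnz X0 LIMSEQ_ignore_initial_segment in auto)
        then show "(\<lambda>n. s n \<xi>) \<longlonglongrightarrow> fL \<xi>" using fLeq[OF \<xi>] by (simp add: s_def)
      qed
      show "AE \<xi> in Q. norm (s n \<xi>) \<le> w \<xi>" for n
        using AES
      proof eventually_elim
        fix \<xi> assume \<xi>: "\<xi> \<in> S"
        have xn: "X (n + N) \<noteq> 0" "\<bar>X (n + N)\<bar> \<le> \<delta>" using Xnz N[of "n + N"] by auto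
        have "\<bar>G (X (n + N)) \<xi> - G 0 \<xi>\<bar> \<le> w \<xi> * \<bar>X (n + N)\<bar>" by (rule mvt[OF \<xi> xn(2)])
        then show "norm (s n \<xi>) \<le> w \<xi>" using xn(1)
          by (simp add: s_def abs_divide divide_le_eq)
      qed
    qed
    have eq: "integral\<^sup>L Q (s n) = ((\<integral>\<xi>. G (0 + X (n + N)) \<xi> \<partial>Q) - (\<integral>\<xi>. G 0 \<xi> \<partial>Q)) / X (n + N)" for n
    proof -
      have xn: "\<bar>X (n + N)\<bar> \<le> \<delta>" using N[of "n + N"] by auto
      have "integral\<^sup>L Q (s n) = (\<integral>\<xi>. G (X (n + N)) \<xi> - G 0 \<xi> \<partial>Q) / X (n + N)"
        unfolding s_def by (rule integral_divide_zero)
      also have "(\<integral>\<xi>. G (X (n + N)) \<xi> - G 0 \<xi> \<partial>Q) = (\<integral>\<xi>. G (X (n + N)) \<xi> \<partial>Q) - (\<integral>\<xi>. G 0 \<xi> \<partial>Q)"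
        by (rule Bochner_Integration.integral_diff) (use Gi xn \<delta> in auto)
      finally show ?thesis by simp
    qed
    show "((\<lambda>h. ((\<integral>\<xi>. G (0 + h) \<xi> \<partial>Q) - (\<integral>\<xi>. G 0 \<xi> \<partial>Q)) / h) \<circ> X) \<longlonglongrightarrow> (\<integral>\<xi>. fL \<xi> \<partial>Q)"
      using lim unfolding eq o_def by (rule LIMSEQ_offset)
  qed
  then show "((\<lambda>t. \<integral>\<xi>. G t \<xi> \<partial>Q) has_real_derivative (\<integral>\<xi>. fL \<xi> \<partial>Q)) (at 0)"
    by (simp add: DERIV_def)
qed



lemma upd_lin: "upd z i (z $ i + s *\<^sub>R e) = z + s *\<^sub>R upd 0 i e"
  by (simp add: upd_def vec_eq_iff)

lemma norm2_vv: "(norm (v :: real^'n^'i))\<^sup>2 = (\<Sum>i\<in>UNIV. \<Sum>j\<in>UNIV. (v $ i $ j)\<^sup>2)"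
proof -
  have "(norm v)\<^sup>2 = v \<bullet> v" by (rule power2_norm_eq_inner)
  also have "\<dots> = (\<Sum>i\<in>UNIV. v $ i \<bullet> v $ i)" by (rule inner_vec_def)
  also have "\<dots> = (\<Sum>i\<in>UNIV. \<Sum>j\<in>UNIV. (v $ i $ j)\<^sup>2)"
    by (simp add: inner_vec_def power2_eq_square)
  finally show ?thesis .
qed


theorem lemma6:
  fixes h :: "'i::finite \<Rightarrow> real^'n^'i \<Rightarrow> 'x::euclidean_space \<Rightarrow> real"
    and X :: "'i \<Rightarrow> (real^'n) set"
    and Xi :: "'i \<Rightarrow> 'x set"
    and P :: "'i \<Rightarrow> 'x measure"
    and K :: "'i \<Rightarrow> nat"
    and samples :: "'i \<Rightarrow> nat \<Rightarrow> 'x"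
    and epsf :: "'i \<Rightarrow> nat \<Rightarrow> real \<Rightarrow> real"
    and \<beta> :: "'i \<Rightarrow> real"
    and L :: "'i \<Rightarrow> 'n \<Rightarrow> real"
    and V :: "(real^'n^'i) set"
    and q :: "'i \<Rightarrow> 'x measure"
    and x :: "real^'n^'i"
  defines "XX \<equiv> {z. \<forall>i. z $ i \<in> X i}"
  assumes meas: "\<And>i z. h i z \<in> borel_measurable borel"
    and C1: "\<And>i z \<xi>. (\<forall>k. k \<noteq> i \<longrightarrow> z $ k \<in> X k) \<Longrightarrow> \<xi> \<in> Xi i \<Longrightarrow>
               C1_on_UNIV (\<lambda>y. h i (upd z i y) \<xi>)"
    and compact: "\<And>i. compact (X i)"
    and convex: "\<And>i. convex (X i)"
    and cvx_h: "\<And>i z \<xi>. (\<forall>k. k \<noteq> i \<longrightarrow> z $ k \<in> X k) \<Longrightarrow> \<xi> \<in> Xi i \<Longrightarrow>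
               convex_on UNIV (\<lambda>y. h i (upd z i y) \<xi>)"
    and P_M: "\<And>i. P i \<in> distrs_M (Xi i)"
    and K_pos: "\<And>i. K i > 0"
    and samples_in: "\<And>i k. k < K i \<Longrightarrow> samples i k \<in> Xi i"
    and eps_nonneg: "\<And>i. epsf i (K i) (\<beta> i) \<ge> 0"
    and light_tail: "\<And>i. \<exists>a>1. \<forall>Q \<in> wball (Xi i) (epsf i (K i) (\<beta> i)) (empirical (K i) (samples i)).
               integrable Q (\<lambda>\<xi>. exp (norm \<xi> powr a))"
    and L_nonneg: "\<And>i j. L i j \<ge> 0"
    and Lip: "\<And>i j z \<xi> \<xi>'. z \<in> XX \<Longrightarrow> \<xi> \<in> Xi i \<Longrightarrow> \<xi>' \<in> Xi i \<Longrightarrow>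
               \<bar>pderiv_ij (\<lambda>w. h i w \<xi>) i j z - pderiv_ij (\<lambda>w. h i w \<xi>') i j z\<bar> \<le> L i j * norm (\<xi> - \<xi>')"
    and integr: "\<And>i z Q. z \<in> XX \<Longrightarrow>
               Q \<in> wball (Xi i) (epsf i (K i) (\<beta> i)) (empirical (K i) (samples i)) \<or> Q = P i \<Longrightarrow>
               integrable Q (h i z)"
    and V_open: "open V"
    and V_sub: "V \<subseteq> XX"
    and x_in: "x \<in> V"
    and q_in: "\<And>i. q i \<in> wball (Xi i) (epsf i (K i) (\<beta> i)) (empirical (K i) (samples i))"
  shows "(norm (Fmap h q x - Fmap h P x))\<^sup>2 \<le>
           (\<Sum>i\<in>UNIV. \<Sum>j\<in>UNIV. (L i j)\<^sup>2 *
              (epsf i (K i) (\<beta> i) + d_W (empirical (K i) (samples i)) (P i))\<^sup>2)"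
proof -
  have xXX: "x \<in> XX" using V_sub x_in by auto
  have xk: "\<forall>k. k \<noteq> i \<longrightarrow> x $ k \<in> X k" for i using xXX by (simp add: XX_def)
  have comp: "\<bar>Fmap h q x $ i $ j - Fmap h P x $ i $ j\<bar>
      \<le> L i j * (epsf i (K i) (\<beta> i) + d_W (empirical (K i) (samples i)) (P i))" for i j
  proof -
    define e :: "real^'n" where "e = axis j 1"
    define c :: "real^'n^'i" where "c = upd 0 i e"
    define emp where "emp = empirical (K i) (samples i)"
    have Xim: "Xi i \<in> sets borel" using P_M[of i] by (simp add: distrs_M_def)
    obtain \<xi>0 where \<xi>0: "\<xi>0 \<in> Xi i" using distrs_nonempty[OF P_M[of i]] by auto
    have empM: "emp \<in> distrs_M (Xi i)" unfolding emp_def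
      by (rule empirical_M[OF K_pos samples_in Xim])
    have qM: "q i \<in> distrs_M (Xi i)" and qd: "d_W emp (q i) \<le> epsf i (K i) (\<beta> i)"
      using q_in[of i] by (auto simp: wball_def emp_def)
    have updc: "upd z i (z $ i + s *\<^sub>R e) = z + s *\<^sub>R c" for z s
      unfolding c_def by (rule upd_lin)
    define D\<xi> where "D\<xi> \<xi> = (SOME D. (\<forall>y. ((\<lambda>y. h i (upd x i y) \<xi>) has_derivative (\<lambda>v. D y \<bullet> v)) (at y)) \<and> continuous_on UNIV D)" for \<xi>
    have D\<xi>: "(\<forall>y. ((\<lambda>y. h i (upd x i y) \<xi>) has_derivative (\<lambda>v. D\<xi> \<xi> y \<bullet> v)) (at y)) \<and> continuous_on UNIV (D\<xi> \<xi>)"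
      if "\<xi> \<in> Xi i" for \<xi>
    proof -
      have "\<exists>D. (\<forall>y. ((\<lambda>y. h i (upd x i y) \<xi>) has_derivative (\<lambda>v. D y \<bullet> v)) (at y)) \<and> continuous_on UNIV D"
        using C1[OF xk that] by (simp add: C1_on_UNIV_def)
      then show ?thesis unfolding D\<xi>_def by (rule someI_ex)
    qed
    define Dv where "Dv \<xi> t = D\<xi> \<xi> (x $ i + t *\<^sub>R e) \<bullet> e" for \<xi> t
    have Gder: "((\<lambda>t. h i (x + t *\<^sub>R c) \<xi>) has_real_derivative Dv \<xi> t) (at t)" if "\<xi> \<in> Xi i" for \<xi> t
    proof -
      have 1: "((\<lambda>t. x $ i + t *\<^sub>R e) has_derivative (\<lambda>s. s *\<^sub>R e)) (at t)"
        by (auto intro!: derivative_eq_intros)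
      have 2: "((\<lambda>y. h i (upd x i y) \<xi>) has_derivative (\<lambda>v. D\<xi> \<xi> (x $ i + t *\<^sub>R e) \<bullet> v)) (at (x $ i + t *\<^sub>R e))"
        using D\<xi>[OF that] by blast
      have "((\<lambda>y. h i (upd x i y) \<xi>) \<circ> (\<lambda>t. x $ i + t *\<^sub>R e) has_derivative
              (\<lambda>v. D\<xi> \<xi> (x $ i + t *\<^sub>R e) \<bullet> v) \<circ> (\<lambda>s. s *\<^sub>R e)) (at t)"
        by (rule diff_chain_at[OF 1 2])
      moreover have "(\<lambda>y. h i (upd x i y) \<xi>) \<circ> (\<lambda>t. x $ i + t *\<^sub>R e) = (\<lambda>t. h i (x + t *\<^sub>R c) \<xi>)"
        by (rule ext) (simp add: o_def updc)
      moreover have "(\<lambda>v. D\<xi> \<xi> (x $ i + t *\<^sub>R e) \<bullet> v) \<circ> (\<lambda>s. s *\<^sub>R e) = (*) (Dv \<xi> t)"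
        by (rule ext) (simp add: Dv_def o_def)
      ultimately show ?thesis by (simp add: has_field_derivative_def)
    qed
    have pd_eq: "pderiv_ij (\<lambda>w. h i w \<xi>) i j (x + t *\<^sub>R c) = Dv \<xi> t" if "\<xi> \<in> Xi i" for \<xi> t
    proof -
      have "pderiv_ij (\<lambda>w. h i w \<xi>) i j (x + t *\<^sub>R c) = deriv (\<lambda>s. h i (x + t *\<^sub>R c + s *\<^sub>R c) \<xi>) 0"
        unfolding pderiv_ij_def e_def[symmetric] updc by (rule refl)
      also have "(\<lambda>s. h i (x + t *\<^sub>R c + s *\<^sub>R c) \<xi>) = (\<lambda>s. h i (x + (s + t) *\<^sub>R c) \<xi>)"
        by (rule ext) (simp add: scaleR_add_left algebra_simps)
      also have "deriv \<dots> 0 = Dv \<xi> t"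
      proof (rule DERIV_imp_deriv)
        show "((\<lambda>s. h i (x + (s + t) *\<^sub>R c) \<xi>) has_real_derivative Dv \<xi> t) (at 0)"
          using DERIV_shift[of "\<lambda>t. h i (x + t *\<^sub>R c) \<xi>" "Dv \<xi> t" 0 t] Gder[OF that, of t] by simp
      qed
      finally show ?thesis .
    qed
    obtain r where r: "r > 0" "ball x r \<subseteq> V" using V_open x_in open_contains_ball by blast
    define \<delta> where "\<delta> = r / (2 * (norm c + 1))"
    have \<delta>0: "\<delta> > 0" unfolding \<delta>_def using r
      by (intro divide_pos_pos mult_pos_pos) (auto intro: add_nonneg_pos)
    have \<delta>c: "\<delta> * norm c < r"
    proof -
      have "\<delta> * norm c \<le> \<delta> * (norm c + 1)" using \<delta>0 by simp
      also have "\<dots> = r / 2"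
      proof -
        have nz: "norm c + 1 \<noteq> 0" "2 + norm c * 2 \<noteq> 0" using norm_ge_zero[of c] by linarith+
        show ?thesis unfolding \<delta>_def using nz by (simp add: field_simps)
      qed
      finally show ?thesis using r by simp
    qed
    have zV: "x + t *\<^sub>R c \<in> XX" if "\<bar>t\<bar> \<le> \<delta>" for t
    proof -
      have "norm (t *\<^sub>R c) = \<bar>t\<bar> * norm c" by simp
      also have "\<dots> \<le> \<delta> * norm c" using that by (intro mult_right_mono) auto
      finally have "x + t *\<^sub>R c \<in> ball x r" using \<delta>c by (simp add: dist_norm)
      then show ?thesis using r V_sub by auto
    qed
    have contDv: "continuous_on {-\<delta>..\<delta>} (Dv \<xi>0)"
      unfolding Dv_def
      by (intro continuous_on_inner continuous_on_const continuous_on_compose2[OF conjunct2[OF D\<xi>[OF \<xi>0]]]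
          continuous_intros) auto
    obtain Bd where Bd: "\<And>t. t \<in> {-\<delta>..\<delta>} \<Longrightarrow> norm (Dv \<xi>0 t) \<le> Bd"
    proof -
      obtain a where a: "\<forall>y\<in>Dv \<xi>0 ` {-\<delta>..\<delta>}. norm y \<le> a"
        using compact_imp_bounded[OF compact_continuous_image[OF contDv compact_Icc]]
        unfolding bounded_iff by blast
      show thesis by (rule that[of a]) (use a in blast)
    qed
    define w where "w (\<xi>::'x) = Bd + L i j * (norm \<xi> + norm \<xi>0)" for \<xi>
    have bnd: "\<bar>Dv \<xi> t\<bar> \<le> w \<xi>" if "\<xi> \<in> Xi i" "\<bar>t\<bar> \<le> \<delta>" for \<xi> t
    proof -
      have "\<bar>pderiv_ij (\<lambda>w. h i w \<xi>) i j (x + t *\<^sub>R c) - pderiv_ij (\<lambda>w. h i w \<xi>0) i j (x + t *\<^sub>R c)\<bar>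
          \<le> L i j * norm (\<xi> - \<xi>0)"
        by (rule Lip[OF zV[OF that(2)] that(1) \<xi>0])
      then have a: "\<bar>Dv \<xi> t - Dv \<xi>0 t\<bar> \<le> L i j * norm (\<xi> - \<xi>0)"
        using pd_eq[OF that(1)] pd_eq[OF \<xi>0] by simp
      have tI: "-\<delta> \<le> t \<and> t \<le> \<delta>" using that(2) unfolding abs_le_iff by linarith
      have b: "\<bar>Dv \<xi>0 t\<bar> \<le> Bd" using Bd[of t] tI by simp
      have c: "L i j * norm (\<xi> - \<xi>0) \<le> L i j * (norm \<xi> + norm \<xi>0)"
        using L_nonneg[of i j] by (intro mult_left_mono norm_triangle_ineq4) auto
      show ?thesis using a b c unfolding w_def by linarith
    qed
    define fL where "fL = (\<lambda>\<xi>. lim (\<lambda>n. (h i (x + (\<delta> / Suc n) *\<^sub>R c) \<xi> - h i (x + 0 *\<^sub>R c) \<xi>) / (\<delta> / Suc n)))"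
    have key: "pderiv_ij (\<lambda>z. \<integral>\<xi>. h i z \<xi> \<partial>Q) i j x = (\<integral>\<xi>. fL \<xi> \<partial>Q)
        \<and> (\<forall>\<xi>\<in>Xi i. fL \<xi> = Dv \<xi> 0) \<and> fL \<in> borel_measurable Q"
      if QM: "Q \<in> distrs_M (Xi i)" and Qi: "\<And>z. z \<in> XX \<Longrightarrow> integrable Q (h i z)" for Q
    proof -
      have sQ: "sets Q = sets borel" and pQ: "prob_space Q" and nQ: "integrable Q norm"
        using QM by (auto simp: distrs_M_def)
      have wi: "integrable Q w"
      proof -
        interpret prob_space Q by (rule pQ)
        show ?thesis unfolding w_def
          using nQ by (intro Bochner_Integration.integrable_add integrable_mult_right) auto
      qed
      have Gm: "(\<lambda>\<xi>. h i (x + t *\<^sub>R c) \<xi>) \<in> borel_measurable Q" for t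
        unfolding measurable_cong_sets[OF sQ refl, of borel] using meas[of i "x + t *\<^sub>R c"] by simp
      have Gi: "integrable Q (\<lambda>\<xi>. h i (x + t *\<^sub>R c) \<xi>)" if "\<bar>t\<bar> \<le> \<delta>" for t
        using Qi[OF zV[OF that]] by simp
      note R = deriv_under_integral[where Q=Q and S="Xi i" and \<delta>=\<delta> and G="\<lambda>t \<xi>. h i (x + t *\<^sub>R c) \<xi>"
          and G'="\<lambda>t \<xi>. Dv \<xi> t" and w=w, OF AE_Xi[OF QM] \<delta>0 Gm Gi Gder bnd wi]
      have R1: "((\<lambda>t. \<integral>\<xi>. h i (x + t *\<^sub>R c) \<xi> \<partial>Q) has_real_derivative (\<integral>\<xi>. fL \<xi> \<partial>Q)) (at 0)"
        using R(1) unfolding fL_def by simp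
      have "pderiv_ij (\<lambda>z. \<integral>\<xi>. h i z \<xi> \<partial>Q) i j x = deriv (\<lambda>t. \<integral>\<xi>. h i (x + t *\<^sub>R c) \<xi> \<partial>Q) 0"
        unfolding pderiv_ij_def e_def[symmetric] updc by (rule refl)
      also have "\<dots> = (\<integral>\<xi>. fL \<xi> \<partial>Q)" by (rule DERIV_imp_deriv[OF R1])
      finally show ?thesis using R(2,3) unfolding fL_def by auto
    qed
    have PiI: "integrable (P i) (h i z)" if "z \<in> XX" for z using integr[OF that] by blast
    have qiI: "integrable (q i) (h i z)" if "z \<in> XX" for z using integr[OF that] q_in by blast
    note kq = key[OF qM qiI] and kP = key[OF P_M PiI]
    have Fq: "Fmap h q x $ i $ j = (\<integral>\<xi>. fL \<xi> \<partial>(q i))"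
      using kq by (simp add: Fmap_def)
    have FP: "Fmap h P x $ i $ j = (\<integral>\<xi>. fL \<xi> \<partial>(P i))"
      using kP by (simp add: Fmap_def)
    have fLlip: "\<bar>fL a - fL b\<bar> \<le> L i j * norm (a - b)" if "a \<in> Xi i" "b \<in> Xi i" for a b
    proof -
      have "fL a = pderiv_ij (\<lambda>w. h i w a) i j x" using kP that pd_eq[of a 0] by simp
      moreover have "fL b = pderiv_ij (\<lambda>w. h i w b) i j x" using kP that pd_eq[of b 0] by simp
      ultimately show ?thesis using Lip[OF xXX that] by simp
    qed
    have sP: "sets (P i) = sets borel" using P_M[of i] by (simp add: distrs_M_def)
    have fLb: "fL \<in> borel_measurable borel"
      by (rule measurable_cong_sets[OF sP refl, of borel, THEN equalityD1, THEN subsetD]) (use kP in blast)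
    have iq: "integrable (q i) fL" by (rule lip_integrable[OF qM fLb fLlip \<xi>0])
    have iP: "integrable (P i) fL" by (rule lip_integrable[OF P_M fLb fLlip \<xi>0])
    have ie: "integrable emp fL" by (rule lip_integrable[OF empM fLb fLlip \<xi>0])
    have w1: "\<bar>integral\<^sup>L emp fL - integral\<^sup>L (q i) fL\<bar> \<le> L i j * d_W emp (q i)"
      by (rule wasserstein_bound[OF empM qM fLb fLlip L_nonneg ie iq])
    have w2: "\<bar>integral\<^sup>L emp fL - integral\<^sup>L (P i) fL\<bar> \<le> L i j * d_W emp (P i)"
      by (rule wasserstein_bound[OF empM P_M fLb fLlip L_nonneg ie iP])
    have "L i j * d_W emp (q i) \<le> L i j * epsf i (K i) (\<beta> i)"
      using qd L_nonneg[of i j] by (intro mult_left_mono) auto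
    then show ?thesis using w1 w2 unfolding Fq FP emp_def[symmetric] distrib_left
      by arith
  qed
  have "(norm (Fmap h q x - Fmap h P x))\<^sup>2 = (\<Sum>i\<in>UNIV. \<Sum>j\<in>UNIV. (Fmap h q x $ i $ j - Fmap h P x $ i $ j)\<^sup>2)"
    by (simp only: norm2_vv vector_minus_component)
  also have "\<dots> \<le> (\<Sum>i\<in>UNIV. \<Sum>j\<in>UNIV. (L i j)\<^sup>2 *
              (epsf i (K i) (\<beta> i) + d_W (empirical (K i) (samples i)) (P i))\<^sup>2)"
  proof (intro sum_mono)
    fix i j
    have "(Fmap h q x $ i $ j - Fmap h P x $ i $ j)\<^sup>2 = \<bar>Fmap h q x $ i $ j - Fmap h P x $ i $ j\<bar>\<^sup>2"
      by (rule power2_abs[symmetric])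
    also have "\<dots> \<le> (L i j * (epsf i (K i) (\<beta> i) + d_W (empirical (K i) (samples i)) (P i)))\<^sup>2"
      by (rule power_mono[OF comp abs_ge_zero])
    finally show "(Fmap h q x $ i $ j - Fmap h P x $ i $ j)\<^sup>2 \<le> (L i j)\<^sup>2 *
              (epsf i (K i) (\<beta> i) + d_W (empirical (K i) (samples i)) (P i))\<^sup>2"
      by (simp only: power_mult_distrib)
  qed
  finally show ?thesis .
qed


end
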